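(* Let $a(x,x')$ be a transition density with respect to $\mu$ on a complete separable metric state space such that $x\mapsto a(x,\cdot)$ is continuous into $L_1(\mu)$. For a probability density $g$, let $X_1,\dots,X_N$ be i.i.d. from $g$. Then for every $\varepsilon>0$, $\mathbf P[\|A^*E_N(g)-A^*g\|_1>\varepsilon]\to0$ exponentially fast in $N$. The convergence is uniform over all densities $g$ with $\int_Kg\,d\mu\ge1-\varepsilon/6$ for a fixed compact set $K$: i.e. for each $\varepsilon>0$ and compact $K$ there are constants $c_1,c_2>0$ such that $\mathbf P[\|A^*E_N(g)-A^*g\|_1>\varepsilon]\le c_1e^{-c_2N}$ for all $N$ and all such $g$.
   Context: $A^*f(x)=\int f(x')a(x',x)\,d\mu(x')$ (extended to probability measures), $E_N(g)$ is the empirical distribution of $X_1,\dots,X_N$, so $A^*E_N(g)(x)=\frac1N\sum_{i=1}^Na(X_i,x)$; $\|\cdot\|_1$ is the $L_1(\mu)$ norm. *)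

theory Defs
  imports "HOL-Probability.Probability"
begin

definition transition_density :: "'a measure \<Rightarrow> ('a \<Rightarrow> 'a \<Rightarrow> real) \<Rightarrow> bool" where
  "transition_density \<mu> a \<longleftrightarrow>
     (\<lambda>(x, x'). a x x') \<in> borel_measurable (\<mu> \<Otimes>\<^sub>M \<mu>) \<and>
     (\<forall>x x'. 0 \<le> a x x') \<and>
     (\<forall>x \<in> space \<mu>. (\<integral>\<^sup>+ x'. ennreal (a x x') \<partial>\<mu>) = 1)"

definition L1_continuous_kernel :: "'a::topological_space measure \<Rightarrow> ('a \<Rightarrow> 'a \<Rightarrow> real) \<Rightarrow> bool" where
  "L1_continuous_kernel \<mu> a \<longleftrightarrow>
     (\<forall>x. ((\<lambda>y. \<integral>\<^sup>+ x'. ennreal \<bar>a y x' - a x x'\<bar> \<partial>\<mu>) \<longlongrightarrow> 0) (at x))"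

definition prob_density :: "'a measure \<Rightarrow> ('a \<Rightarrow> real) \<Rightarrow> bool" where
  "prob_density \<mu> g \<longleftrightarrow> g \<in> borel_measurable \<mu> \<and> (\<forall>x. 0 \<le> g x) \<and>
     (\<integral>\<^sup>+ x. ennreal (g x) \<partial>\<mu>) = 1"

definition adj_op :: "'a measure \<Rightarrow> ('a \<Rightarrow> 'a \<Rightarrow> real) \<Rightarrow> ('a \<Rightarrow> real) \<Rightarrow> 'a \<Rightarrow> real" where
  "adj_op \<mu> a g x = (\<integral> x'. g x' * a x' x \<partial>\<mu>)"

definition adj_emp :: "('a \<Rightarrow> 'a \<Rightarrow> real) \<Rightarrow> nat \<Rightarrow> (nat \<Rightarrow> 'a) \<Rightarrow> 'a \<Rightarrow> real" where
  "adj_emp a N X x = (\<Sum>i<N. a (X i) x) / real N"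

definition L1_norm :: "'a measure \<Rightarrow> ('a \<Rightarrow> real) \<Rightarrow> ennreal" where
  "L1_norm \<mu> f = (\<integral>\<^sup>+ x. ennreal \<bar>f x\<bar> \<partial>\<mu>)"

definition sample_space :: "'a measure \<Rightarrow> ('a \<Rightarrow> real) \<Rightarrow> nat \<Rightarrow> (nat \<Rightarrow> 'a) measure" where
  "sample_space \<mu> g N = PiM {..<N} (\<lambda>_. density \<mu> (\<lambda>x. ennreal (g x)))"

definition dev_prob :: "'a measure \<Rightarrow> ('a \<Rightarrow> 'a \<Rightarrow> real) \<Rightarrow> ('a \<Rightarrow> real) \<Rightarrow> nat \<Rightarrow> real \<Rightarrow> real" where
  "dev_prob \<mu> a g N \<epsilon> = measure (sample_space \<mu> g N)
     {X \<in> space (sample_space \<mu> g N).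
        ennreal \<epsilon> < L1_norm \<mu> (\<lambda>x. adj_emp a N X x - adj_op \<mu> a g x)}"

end

theory Submission
  imports Defs
begin


lemma hoeff_prod:
  fixes M :: "'a measure" and C :: "'a set"
  assumes P: "prob_space M" and C: "C \<in> sets M" and N: "N \<ge> 1" and t: "t \<ge> 0"
  shows "measure (PiM {..<N} (\<lambda>_. M)) {X \<in> space (PiM {..<N} (\<lambda>_. M)).
           \<bar>(\<Sum>i<N. indicator C (X i)) / real N - measure M C\<bar> \<ge> t} \<le> 2 * exp (- 2 * real N * t\<^sup>2)"
proof -
  let ?P = "PiM {..<N} (\<lambda>_. M)"
  interpret pp: product_prob_space "\<lambda>_. M" "{..<N}"
    using P by (simp add: product_prob_space_def product_sigma_finite_def prob_space_imp_sigma_finite product_prob_space_axioms_def)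
  have PPax: "prob_space ?P" by (rule pp.prob_space_axioms)
  have comp: "distr ?P M (\<lambda>\<omega>. \<omega> i) = M" if "i < N" for i
    using distr_PiM_component[of "{..<N}" "\<lambda>_. M" i] P that by auto
  have ind0: "prob_space.indep_vars ?P (\<lambda>_. M) (\<lambda>i \<omega>. \<omega> i) {..<N}"
  proof (subst prob_space.indep_vars_iff_distr_eq_PiM'[OF PPax])
    show "{..<N} \<noteq> {}" using N by (auto simp: lessThan_empty_iff)
    show "(\<lambda>\<omega>. \<omega> i) \<in> measurable ?P M" if "i \<in> {..<N}" for i using that by measurable
    have "distr ?P ?P (\<lambda>x. \<lambda>i\<in>{..<N}. x i) = distr ?P ?P (\<lambda>x. x)"
      by (rule distr_cong) (auto simp: space_PiM PiE_def extensional_def restrict_def fun_eq_iff)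
    also have "\<dots> = ?P" by simp
    also have "\<dots> = (\<Pi>\<^sub>M i\<in>{..<N}. distr ?P M (\<lambda>\<omega>. \<omega> i))"
      by (rule PiM_cong) (auto simp: comp)
    finally show "distr ?P (\<Pi>\<^sub>M i\<in>{..<N}. M) (\<lambda>x. \<lambda>i\<in>{..<N}. x i) = (\<Pi>\<^sub>M i\<in>{..<N}. distr ?P M (\<lambda>\<omega>. \<omega> i))" .
  qed
  have ind: "prob_space.indep_vars ?P (\<lambda>_. borel) (\<lambda>i \<omega>. indicator C (\<omega> i) :: real) {..<N}"
    by (rule pp.P.indep_vars_compose2[OF ind0]) (use C in measurable)
  have d: "distr ?P borel (\<lambda>\<omega>. indicator C (\<omega> i) :: real) = distr M borel (indicator C)" if "i < N" for i
  proof -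
    have "distr ?P borel (\<lambda>\<omega>. indicator C (\<omega> i) :: real) = distr (distr ?P M (\<lambda>\<omega>. \<omega> i)) borel (indicator C)"
    proof -
      have m1: "(indicator C :: _ \<Rightarrow> real) \<in> borel_measurable M" using C by measurable
      have m2: "(\<lambda>\<omega>. \<omega> i) \<in> measurable ?P M" by (rule measurable_component_singleton) (use that in auto)
      show ?thesis using distr_distr[OF m1 m2] by (simp add: comp_def)
    qed
    then show ?thesis using comp[OF that] by simp
  qed
  interpret H: Hoeffding_ineq_iid ?P "{..<N}" "\<lambda>i \<omega>. indicator C (\<omega> i)" "\<lambda>\<omega>. indicator C (\<omega> 0)" 0 1
    "integral\<^sup>L ?P (\<lambda>\<omega>. indicator C (\<omega> 0))"
  proof unfold_locales
    have "0 \<in> {..<N}" using N by auto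
    then show "(\<lambda>\<omega>. indicator C (\<omega> 0) :: real) \<in> borel_measurable ?P" using C by measurable
  qed (use ind d N in \<open>auto simp: d\<close>)
  have E: "integral\<^sup>L ?P (\<lambda>\<omega>. indicator C (\<omega> 0)) = measure M C"
  proof -
    have "integral\<^sup>L ?P (\<lambda>\<omega>. indicator C (\<omega> 0)) = integral\<^sup>L (distr ?P M (\<lambda>\<omega>. \<omega> 0)) (indicator C :: _ \<Rightarrow> real)"
    proof -
      have m1: "(indicator C :: _ \<Rightarrow> real) \<in> borel_measurable M" using C by measurable
      have m2: "(\<lambda>\<omega>. \<omega> 0) \<in> measurable ?P M" by (rule measurable_component_singleton) (use N in auto)
      show ?thesis by (subst integral_distr[OF m2 m1]) (rule refl)
    qed
    also have "\<dots> = measure M C" using comp[of 0] N C by simp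
    finally show ?thesis .
  qed
  show ?thesis
    using H.Hoeffding_ineq_abs_ge'[OF t] N by (simp add: E lessThan_empty_iff)
qed



lemma partition_K:
  fixes K :: "'a::metric_space set" and F :: "'a \<Rightarrow> 'a \<Rightarrow> ennreal"
  assumes K: "compact K" and eta: "\<eta> > 0"
    and cont: "\<And>x. ((\<lambda>y. F y x) \<longlongrightarrow> 0) (at x)" and F0: "\<And>x. F x x = 0"
  obtains m :: nat and C :: "nat \<Rightarrow> 'a set" and xs :: "nat \<Rightarrow> 'a" where
    "\<And>j. j < m \<Longrightarrow> C j \<in> sets borel"
    "\<And>j j'. j < m \<Longrightarrow> j' < m \<Longrightarrow> j \<noteq> j' \<Longrightarrow> C j \<inter> C j' = {}"
    "(\<Union>j<m. C j) = K"
    "\<And>j y. j < m \<Longrightarrow> y \<in> C j \<Longrightarrow> F y (xs j) < ennreal \<eta>"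
proof -
  have "\<exists>U. open U \<and> x \<in> U \<and> (\<forall>y\<in>U. F y x < ennreal \<eta>)" for x
  proof -
    have "eventually (\<lambda>y. F y x < ennreal \<eta>) (at x)"
      by (rule order_tendstoD(2)[OF cont]) (use eta in simp)
    then obtain S where S: "open S" "x \<in> S" "\<forall>y\<in>S. y \<noteq> x \<longrightarrow> F y x < ennreal \<eta>"
      unfolding eventually_at_topological by blast
    then show ?thesis using F0[of x] eta by (intro exI[of _ S]) auto
  qed
  then obtain U where U: "\<And>x. open (U x)" "\<And>x. x \<in> U x" "\<And>x y. y \<in> U x \<Longrightarrow> F y x < ennreal \<eta>"
    by metis
  obtain T where T: "T \<subseteq> K" "finite T" "K \<subseteq> (\<Union>c\<in>T. U c)"
    by (rule compactE_image[OF K, of K U]) (use U in auto)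
  obtain h where h: "bij_betw h {0..<card T} T" using ex_bij_betw_nat_finite[OF T(2)] by blast
  define m where "m = card T"
  define C where "C j = K \<inter> U (h j) - (\<Union>l<j. U (h l))" for j
  show ?thesis
  proof (rule that[of m C h])
    have Kc: "closed K" using K by (rule compact_imp_closed)
    show "C j \<in> sets borel" if "j < m" for j
      unfolding C_def using U(1) Kc by (intro sets.Diff sets.Int sets.finite_UN) auto
    show "C j \<inter> C j' = {}" if "j < m" "j' < m" "j \<noteq> j'" for j j'
    proof (cases "j < j'")
      case True then show ?thesis unfolding C_def by auto
    next
      case False then have "j' < j" using that by simp
      then show ?thesis unfolding C_def by auto
    qed
    show "(\<Union>j<m. C j) = K"
    proof
      show "(\<Union>j<m. C j) \<subseteq> K" unfolding C_def by auto
      show "K \<subseteq> (\<Union>j<m. C j)"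
      proof
        fix y assume y: "y \<in> K"
        then obtain c where c: "c \<in> T" "y \<in> U c" using T(3) by blast
        then obtain j0 where j0: "j0 < m" "h j0 = c" using h unfolding m_def bij_betw_def by (metis atLeastLessThan_iff imageE)
        define j where "j = (LEAST j. y \<in> U (h j))"
        have "y \<in> U (h j)" unfolding j_def by (rule LeastI[of _ j0]) (use j0 c in auto)
        moreover have "j \<le> j0" unfolding j_def by (rule Least_le) (use j0 c in auto)
        moreover have "y \<notin> U (h l)" if "l < j" for l
          using not_less_Least[of l "\<lambda>j. y \<in> U (h j)"] that unfolding j_def by auto
        ultimately have "y \<in> C j" "j < m" unfolding C_def using y j0 by auto
        then show "y \<in> (\<Union>j<m. C j)" by auto
      qed
    qed
    show "F y (h j) < ennreal \<eta>" if "j < m" "y \<in> C j" for j y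
      using that U(3)[of y "h j"] unfolding C_def by auto
  qed
qed




lemma det_bound:
  fixes \<mu> :: "'a measure" and a :: "'a \<Rightarrow> 'a \<Rightarrow> real" and g :: "'a \<Rightarrow> real"
    and C :: "nat \<Rightarrow> 'a set" and X :: "nat \<Rightarrow> 'a"
  assumes sf: "sigma_finite_measure \<mu>" and sp: "space \<mu> = UNIV"
    and A[measurable]: "(\<lambda>p. a (fst p) (snd p)) \<in> borel_measurable (\<mu> \<Otimes>\<^sub>M \<mu>)"
    and a_nn: "\<And>x y. 0 \<le> a x y" and a1: "\<And>y. (\<integral>\<^sup>+x. ennreal (a y x) \<partial>\<mu>) = 1"
    and g[measurable]: "g \<in> borel_measurable \<mu>" and g_nn: "\<And>x. 0 \<le> g x"
    and g1: "(\<integral>\<^sup>+x. ennreal (g x) \<partial>\<mu>) = 1"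
    and C[measurable]: "\<And>j. C j \<in> sets \<mu>"
    and Cdisj: "\<And>j j'. j < m \<Longrightarrow> j' < m \<Longrightarrow> j \<noteq> j' \<Longrightarrow> C j \<inter> C j' = {}"
    and CK: "(\<Union>j<m. C j) = K"
    and Ceta: "\<And>j y. j < m \<Longrightarrow> y \<in> C j \<Longrightarrow> (\<integral>\<^sup>+x. ennreal \<bar>a y x - a (xs j) x\<bar> \<partial>\<mu>) < ennreal \<eta>"
    and eta: "\<eta> \<ge> 0" and N: "N \<ge> 1"
  shows "L1_norm \<mu> (\<lambda>x. adj_emp a N X x - adj_op \<mu> a g x) \<le>
     ennreal ((\<Sum>j<m. \<bar>(\<Sum>i<N. indicator (C j) (X i)) / real N - measure (density \<mu> g) (C j)\<bar>)
        + 2 * \<eta> + (\<Sum>i<N. indicator (- K) (X i)) / real N + measure (density \<mu> g) (- K))"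
proof -
  interpret sigma_finite_measure \<mu> by (rule sf)
  interpret pair_sigma_finite \<mu> \<mu> by (simp add: pair_sigma_finite_def sf)
  have As[measurable]: "(\<lambda>p. a (snd p) (fst p)) \<in> borel_measurable (\<mu> \<Otimes>\<^sub>M \<mu>)"
    using measurable_compose[OF measurable_Pair[OF measurable_snd measurable_fst] A] by simp
  have a2[measurable]: "(\<lambda>x. a y x) \<in> borel_measurable \<mu>" for y
    using measurable_compose[OF measurable_Pair1'[of y \<mu> \<mu>] A] sp by simp
  have a3[measurable]: "(\<lambda>y. a y x) \<in> borel_measurable \<mu>" for x
    using measurable_compose[OF measurable_Pair2'[of x \<mu> \<mu>] A] sp by simp
  have K[measurable]: "K \<in> sets \<mu>" unfolding CK[symmetric] by auto
  have Kc[measurable]: "- K \<in> sets \<mu>"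
    using sets.compl_sets[OF K] sp by (simp add: Compl_eq_Diff_UNIV)
  define B where "B y x = (\<Sum>j<m. indicator (C j) y * a (xs j) x)" for y x
  define r where "r y x = a y x - B y x" for y x
  define ph where "ph j = (\<Sum>i<N. indicator (C j) (X i)) / real N" for j
  define p where "p j = measure (density \<mu> g) (C j)" for j
  define q where "q = measure (density \<mu> g) (- K)"
  define qh where "qh = (\<Sum>i<N. indicator (- K) (X i)) / real N"
  have r_m[measurable]: "(\<lambda>x. r y x) \<in> borel_measurable \<mu>" for y
    unfolding r_def B_def by measurable
  have r_m2[measurable]: "(\<lambda>p. r (snd p) (fst p)) \<in> borel_measurable (\<mu> \<Otimes>\<^sub>M \<mu>)"
    unfolding r_def B_def by measurable
  have r_m3[measurable]: "(\<lambda>p. r (fst p) (snd p)) \<in> borel_measurable (\<mu> \<Otimes>\<^sub>M \<mu>)"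
    unfolding r_def B_def by measurable

  have F1: "(\<integral>\<^sup>+x. ennreal \<bar>r y x\<bar> \<partial>\<mu>) \<le> ennreal \<eta> + indicator (- K) y" for y
  proof (cases "y \<in> K")
    case True
    then obtain j where j: "j < m" "y \<in> C j" using CK by auto
    have "B y x = a (xs j) x" for x
    proof -
      have "B y x = (\<Sum>j'\<in>{j}. indicator (C j') y * a (xs j') x)"
        unfolding B_def by (rule sum.mono_neutral_right) (use j Cdisj in \<open>auto simp: indicator_def\<close>)
      then show ?thesis using j by simp
    qed
    then have "(\<integral>\<^sup>+x. ennreal \<bar>r y x\<bar> \<partial>\<mu>) < ennreal \<eta>" using Ceta[OF j] by (simp add: r_def)
    then show ?thesis using True by simp
  next
    case False
    then have "y \<notin> C j" if "j < m" for j using CK that by auto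
    then have "B y x = 0" for x unfolding B_def by (auto intro!: sum.neutral)
    then have "(\<integral>\<^sup>+x. ennreal \<bar>r y x\<bar> \<partial>\<mu>) = 1" using a1[of y] a_nn by (simp add: r_def)
    then show ?thesis using False by simp
  qed

  have T1: "(\<integral>\<^sup>+x. (\<integral>\<^sup>+y. ennreal (g y * a y x) \<partial>\<mu>) \<partial>\<mu>) = 1"
  proof -
    have "(\<integral>\<^sup>+x. (\<integral>\<^sup>+y. ennreal (g y * a y x) \<partial>\<mu>) \<partial>\<mu>) = (\<integral>\<^sup>+y. (\<integral>\<^sup>+x. ennreal (g y * a y x) \<partial>\<mu>) \<partial>\<mu>)"
      by (rule Fubini') measurable
    also have "\<dots> = (\<integral>\<^sup>+y. ennreal (g y) * (\<integral>\<^sup>+x. ennreal (a y x) \<partial>\<mu>) \<partial>\<mu>)"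
      by (intro nn_integral_cong) (simp add: ennreal_mult g_nn a_nn nn_integral_cmult)
    also have "\<dots> = 1" using a1 g1 by simp
    finally show ?thesis .
  qed
  have AEint: "AE x in \<mu>. integrable \<mu> (\<lambda>y. g y * a y x)"
  proof -
    have "AE x in \<mu>. (\<integral>\<^sup>+y. ennreal (g y * a y x) \<partial>\<mu>) \<noteq> \<infinity>"
      by (rule nn_integral_PInf_AE) (measurable, use T1 in simp)
    then show ?thesis
    proof (rule AE_mp[OF _ AE_I2], intro impI)
      fix x assume fin: "(\<integral>\<^sup>+y. ennreal (g y * a y x) \<partial>\<mu>) \<noteq> \<infinity>"
      show "integrable \<mu> (\<lambda>y. g y * a y x)"
        by (rule integrableI_bounded) (measurable, use fin in \<open>auto simp: g_nn a_nn abs_mult top.not_eq_extremum\<close>)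
    qed
  qed
  have gint: "integrable \<mu> g"
    by (rule integrableI_bounded) (measurable, use g1 in \<open>auto simp: g_nn\<close>)
  have meas_dens: "measure (density \<mu> g) S = (\<integral>y. g y * indicator S y \<partial>\<mu>)"
    and emeas_dens: "emeasure (density \<mu> g) S = ennreal (\<integral>y. g y * indicator S y \<partial>\<mu>)"
    if S[measurable]: "S \<in> sets \<mu>" for S
  proof -
    have "emeasure (density \<mu> g) S = (\<integral>\<^sup>+y. ennreal (g y) * indicator S y \<partial>\<mu>)"
      by (rule emeasure_density) measurable
    also have "\<dots> = (\<integral>\<^sup>+y. ennreal (g y * indicator S y) \<partial>\<mu>)"
      by (intro nn_integral_cong) (auto simp: indicator_def)
    also have "\<dots> = ennreal (\<integral>y. g y * indicator S y \<partial>\<mu>)"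
      by (rule nn_integral_eq_integral) (use integrable_real_mult_indicator[OF S gint] g_nn in auto)
    finally show "emeasure (density \<mu> g) S = ennreal (\<integral>y. g y * indicator S y \<partial>\<mu>)" .
    then show "measure (density \<mu> g) S = (\<integral>y. g y * indicator S y \<partial>\<mu>)"
      by (simp add: measure_def integral_nonneg_AE g_nn)
  qed

  have pw: "ennreal \<bar>adj_emp a N X x - adj_op \<mu> a g x\<bar> \<le>
      (\<Sum>j<m. ennreal \<bar>ph j - p j\<bar> * ennreal (a (xs j) x))
      + (\<Sum>i<N. ennreal (1 / real N) * ennreal \<bar>r (X i) x\<bar>)
      + (\<integral>\<^sup>+y. ennreal \<bar>g y * r y x\<bar> \<partial>\<mu>)"
    if int: "integrable \<mu> (\<lambda>y. g y * a y x)" for x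
  proof -
    have eqB: "(\<lambda>y. g y * B y x) = (\<lambda>y. \<Sum>j<m. a (xs j) x * (g y * indicator (C j) y))"
      unfolding B_def sum_distrib_left by (intro ext sum.cong refl) (simp add: mult_ac)
    have intB: "integrable \<mu> (\<lambda>y. g y * B y x)"
      unfolding eqB by (intro Bochner_Integration.integrable_sum) (simp add: integrable_real_mult_indicator[OF C gint])
    have vB: "(\<integral>y. g y * B y x \<partial>\<mu>) = (\<Sum>j<m. p j * a (xs j) x)"
      unfolding eqB
      by (subst Bochner_Integration.integral_sum) (auto intro!: integrable_real_mult_indicator[OF C gint] simp: p_def meas_dens mult.commute)
    have eqr: "(\<lambda>y. g y * r y x) = (\<lambda>y. g y * a y x - g y * B y x)"
      by (auto simp: r_def right_diff_distrib)
    have intr: "integrable \<mu> (\<lambda>y. g y * r y x)"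
      unfolding eqr using int intB by (rule Bochner_Integration.integrable_diff)
    have v: "adj_op \<mu> a g x = (\<Sum>j<m. p j * a (xs j) x) + (\<integral>y. g y * r y x \<partial>\<mu>)"
    proof -
      have "(\<lambda>y. g y * a y x) = (\<lambda>y. g y * B y x + g y * r y x)"
        by (auto simp: r_def algebra_simps)
      then have "adj_op \<mu> a g x = (\<integral>y. g y * B y x + g y * r y x \<partial>\<mu>)"
        unfolding adj_op_def by simp
      also have "\<dots> = (\<integral>y. g y * B y x \<partial>\<mu>) + (\<integral>y. g y * r y x \<partial>\<mu>)"
        using intB intr by (rule Bochner_Integration.integral_add)
      finally show ?thesis using vB by simp
    qed
    have u: "adj_emp a N X x = (\<Sum>j<m. ph j * a (xs j) x) + (\<Sum>i<N. r (X i) x) / real N"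
    proof -
      have "(\<Sum>i<N. a (X i) x) = (\<Sum>i<N. B (X i) x) + (\<Sum>i<N. r (X i) x)"
        by (simp add: r_def sum.distrib[symmetric])
      also have "(\<Sum>i<N. B (X i) x) = (\<Sum>j<m. (\<Sum>i<N. indicator (C j) (X i)) * a (xs j) x)"
        unfolding B_def by (subst sum.swap) (simp add: sum_distrib_right)
      finally have s1: "(\<Sum>i<N. a (X i) x) = (\<Sum>j<m. (\<Sum>i<N. indicator (C j) (X i)) * a (xs j) x) + (\<Sum>i<N. r (X i) x)" .
      have s2: "(\<Sum>j<m. ph j * a (xs j) x) = (\<Sum>j<m. (\<Sum>i<N. indicator (C j) (X i)) * a (xs j) x / real N)"
        unfolding ph_def by (rule sum.cong[OF refl]) (rule times_divide_eq_left)
      show ?thesis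
        unfolding adj_emp_def s1 s2 add_divide_distrib sum_divide_distrib[symmetric] ..
    qed
    have ineq: "\<bar>adj_emp a N X x - adj_op \<mu> a g x\<bar> \<le>
       ((\<Sum>j<m. \<bar>ph j - p j\<bar> * a (xs j) x) + (\<Sum>i<N. (1 / real N) * \<bar>r (X i) x\<bar>))
       + \<bar>\<integral>y. g y * r y x \<partial>\<mu>\<bar>"
    proof -
      have e: "adj_emp a N X x - adj_op \<mu> a g x = (\<Sum>j<m. (ph j - p j) * a (xs j) x)
         + (\<Sum>i<N. (1 / real N) * r (X i) x) - (\<integral>y. g y * r y x \<partial>\<mu>)"
      proof -
        have d1: "(\<Sum>j<m. (ph j - p j) * a (xs j) x) = (\<Sum>j<m. ph j * a (xs j) x) - (\<Sum>j<m. p j * a (xs j) x)"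
          by (simp only: left_diff_distrib sum_subtractf)
        have d2: "(\<Sum>i<N. (1 / real N) * r (X i) x) = (\<Sum>i<N. r (X i) x) / real N"
          by (simp only: sum_distrib_left[symmetric]) simp
        show ?thesis unfolding u v d1 d2 by simp
      qed
      have 1: "\<bar>\<Sum>j<m. (ph j - p j) * a (xs j) x\<bar> \<le> (\<Sum>j<m. \<bar>ph j - p j\<bar> * a (xs j) x)"
        using sum_abs[of "\<lambda>j. (ph j - p j) * a (xs j) x" "{..<m}"] by (simp add: abs_mult a_nn)
      have 2: "\<bar>\<Sum>i<N. (1 / real N) * r (X i) x\<bar> \<le> (\<Sum>i<N. (1 / real N) * \<bar>r (X i) x\<bar>)"
        using sum_abs[of "\<lambda>i. (1 / real N) * r (X i) x" "{..<N}"] by (simp add: abs_mult)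
      show ?thesis unfolding e using 1 2 by linarith
    qed
    have "ennreal \<bar>adj_emp a N X x - adj_op \<mu> a g x\<bar> \<le>
       ennreal ((\<Sum>j<m. \<bar>ph j - p j\<bar> * a (xs j) x) + (\<Sum>i<N. (1 / real N) * \<bar>r (X i) x\<bar>))
       + ennreal \<bar>\<integral>y. g y * r y x \<partial>\<mu>\<bar>"
      using ennreal_leI[OF ineq] by (subst ennreal_plus[symmetric]) (auto intro!: add_nonneg_nonneg sum_nonneg mult_nonneg_nonneg a_nn)
    also have "ennreal ((\<Sum>j<m. \<bar>ph j - p j\<bar> * a (xs j) x) + (\<Sum>i<N. (1 / real N) * \<bar>r (X i) x\<bar>))
       = (\<Sum>j<m. ennreal \<bar>ph j - p j\<bar> * ennreal (a (xs j) x))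
      + (\<Sum>i<N. ennreal (1 / real N) * ennreal \<bar>r (X i) x\<bar>)"
    proof -
      have n1: "(\<Sum>j<m. ennreal \<bar>ph j - p j\<bar> * ennreal (a (xs j) x)) = ennreal (\<Sum>j<m. \<bar>ph j - p j\<bar> * a (xs j) x)"
        by (simp add: ennreal_mult[symmetric] a_nn)
      have n2: "(\<Sum>i<N. ennreal (1 / real N) * ennreal \<bar>r (X i) x\<bar>) = ennreal (\<Sum>i<N. (1 / real N) * \<bar>r (X i) x\<bar>)"
        by (simp add: ennreal_mult[symmetric])
      show ?thesis unfolding n1 n2
        by (rule ennreal_plus) (auto intro!: sum_nonneg mult_nonneg_nonneg a_nn)
    qed
    also have "ennreal \<bar>\<integral>y. g y * r y x \<partial>\<mu>\<bar> \<le> (\<integral>\<^sup>+y. ennreal \<bar>g y * r y x\<bar> \<partial>\<mu>)"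
      using integral_norm_bound_ennreal[OF intr] by simp
    finally show ?thesis by (simp add: add_mono)
  qed
  have step1: "L1_norm \<mu> (\<lambda>x. adj_emp a N X x - adj_op \<mu> a g x) \<le>
     (\<integral>\<^sup>+x. (\<Sum>j<m. ennreal \<bar>ph j - p j\<bar> * ennreal (a (xs j) x))
      + (\<Sum>i<N. ennreal (1 / real N) * ennreal \<bar>r (X i) x\<bar>)
      + (\<integral>\<^sup>+y. ennreal \<bar>g y * r y x\<bar> \<partial>\<mu>) \<partial>\<mu>)"
    unfolding L1_norm_def
  proof (rule nn_integral_mono_AE)
    show "AE x in \<mu>. ennreal \<bar>adj_emp a N X x - adj_op \<mu> a g x\<bar> \<le>
      (\<Sum>j<m. ennreal \<bar>ph j - p j\<bar> * ennreal (a (xs j) x))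
      + (\<Sum>i<N. ennreal (1 / real N) * ennreal \<bar>r (X i) x\<bar>)
      + (\<integral>\<^sup>+y. ennreal \<bar>g y * r y x\<bar> \<partial>\<mu>)"
      using AEint by eventually_elim (rule pw)
  qed
  have step2: "(\<integral>\<^sup>+x. (\<Sum>j<m. ennreal \<bar>ph j - p j\<bar> * ennreal (a (xs j) x))
      + (\<Sum>i<N. ennreal (1 / real N) * ennreal \<bar>r (X i) x\<bar>)
      + (\<integral>\<^sup>+y. ennreal \<bar>g y * r y x\<bar> \<partial>\<mu>) \<partial>\<mu>) =
      (\<integral>\<^sup>+x. (\<Sum>j<m. ennreal \<bar>ph j - p j\<bar> * ennreal (a (xs j) x)) \<partial>\<mu>)
      + (\<integral>\<^sup>+x. (\<Sum>i<N. ennreal (1 / real N) * ennreal \<bar>r (X i) x\<bar>) \<partial>\<mu>)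
      + (\<integral>\<^sup>+x. (\<integral>\<^sup>+y. ennreal \<bar>g y * r y x\<bar> \<partial>\<mu>) \<partial>\<mu>)"
  proof -
    have m1: "(\<lambda>x. (\<Sum>j<m. ennreal \<bar>ph j - p j\<bar> * ennreal (a (xs j) x))) \<in> borel_measurable \<mu>" by measurable
    have m2: "(\<lambda>x. (\<Sum>i<N. ennreal (1 / real N) * ennreal \<bar>r (X i) x\<bar>)) \<in> borel_measurable \<mu>" by measurable
    have m3: "(\<lambda>x. (\<integral>\<^sup>+y. ennreal \<bar>g y * r y x\<bar> \<partial>\<mu>)) \<in> borel_measurable \<mu>" by measurable
    have m12: "(\<lambda>x. (\<Sum>j<m. ennreal \<bar>ph j - p j\<bar> * ennreal (a (xs j) x)) + (\<Sum>i<N. ennreal (1 / real N) * ennreal \<bar>r (X i) x\<bar>)) \<in> borel_measurable \<mu>"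
      using m1 m2 by (rule borel_measurable_add)
    show ?thesis
      unfolding nn_integral_add[OF m12 m3] nn_integral_add[OF m1 m2] ..
  qed
  have I1: "(\<integral>\<^sup>+x. (\<Sum>j<m. ennreal \<bar>ph j - p j\<bar> * ennreal (a (xs j) x)) \<partial>\<mu>) = (\<Sum>j<m. ennreal \<bar>ph j - p j\<bar>)"
  proof -
    have "(\<integral>\<^sup>+x. (\<Sum>j<m. ennreal \<bar>ph j - p j\<bar> * ennreal (a (xs j) x)) \<partial>\<mu>)
       = (\<Sum>j<m. (\<integral>\<^sup>+x. ennreal \<bar>ph j - p j\<bar> * ennreal (a (xs j) x) \<partial>\<mu>))"
      by (rule nn_integral_sum) measurable
    also have "\<dots> = (\<Sum>j<m. ennreal \<bar>ph j - p j\<bar> * (\<integral>\<^sup>+x. ennreal (a (xs j) x) \<partial>\<mu>))"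
      by (intro sum.cong refl nn_integral_cmult) measurable
    finally show ?thesis by (simp add: a1)
  qed
  have I2: "(\<integral>\<^sup>+x. (\<Sum>i<N. ennreal (1 / real N) * ennreal \<bar>r (X i) x\<bar>) \<partial>\<mu>) \<le> ennreal (\<eta> + qh)"
  proof -
    have "(\<integral>\<^sup>+x. (\<Sum>i<N. ennreal (1 / real N) * ennreal \<bar>r (X i) x\<bar>) \<partial>\<mu>)
       = (\<Sum>i<N. (\<integral>\<^sup>+x. ennreal (1 / real N) * ennreal \<bar>r (X i) x\<bar> \<partial>\<mu>))"
      by (rule nn_integral_sum) measurable
    also have "\<dots> = (\<Sum>i<N. ennreal (1 / real N) * (\<integral>\<^sup>+x. ennreal \<bar>r (X i) x\<bar> \<partial>\<mu>))"
      by (intro sum.cong refl nn_integral_cmult) measurable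
    also have "\<dots> \<le> (\<Sum>i<N. ennreal (1 / real N) * (ennreal \<eta> + ennreal (indicator (- K) (X i))))"
      by (intro sum_mono mult_left_mono) (use F1 in \<open>auto simp: ennreal_indicator\<close>)
    also have "\<dots> = (\<Sum>i<N. ennreal ((1 / real N) * (\<eta> + indicator (- K) (X i))))"
    proof (intro sum.cong refl)
      fix i
      have e2: "ennreal (1 / real N) * ennreal (\<eta> + indicator (- K) (X i)) = ennreal ((1 / real N) * (\<eta> + indicator (- K) (X i)))"
        by (rule ennreal_mult[symmetric]) (auto simp: eta)
      have e1: "ennreal \<eta> + ennreal (indicator (- K) (X i)) = ennreal (\<eta> + indicator (- K) (X i))"
        by (rule ennreal_plus[symmetric]) (auto simp: eta)
      show "ennreal (1 / real N) * (ennreal \<eta> + ennreal (indicator (- K) (X i))) = ennreal ((1 / real N) * (\<eta> + indicator (- K) (X i)))"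
        unfolding e1 e2 ..
    qed
    also have "\<dots> = ennreal (\<Sum>i<N. (1 / real N) * (\<eta> + indicator (- K) (X i)))"
      by (rule sum_ennreal) (simp add: eta)
    also have "(\<Sum>i<N. (1 / real N) * (\<eta> + indicator (- K) (X i))) = \<eta> + qh"
      using N by (simp add: qh_def distrib_left sum.distrib sum_distrib_left[symmetric] sum_divide_distrib)
    finally show ?thesis .
  qed
  have I3: "(\<integral>\<^sup>+x. (\<integral>\<^sup>+y. ennreal \<bar>g y * r y x\<bar> \<partial>\<mu>) \<partial>\<mu>) \<le> ennreal (\<eta> + q)"
  proof -
    have "(\<integral>\<^sup>+x. (\<integral>\<^sup>+y. ennreal \<bar>g y * r y x\<bar> \<partial>\<mu>) \<partial>\<mu>) = (\<integral>\<^sup>+y. (\<integral>\<^sup>+x. ennreal \<bar>g y * r y x\<bar> \<partial>\<mu>) \<partial>\<mu>)"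
      by (rule Fubini') measurable
    also have "\<dots> = (\<integral>\<^sup>+y. ennreal (g y) * (\<integral>\<^sup>+x. ennreal \<bar>r y x\<bar> \<partial>\<mu>) \<partial>\<mu>)"
    proof (intro nn_integral_cong)
      fix y
      have "(\<integral>\<^sup>+x. ennreal \<bar>g y * r y x\<bar> \<partial>\<mu>) = (\<integral>\<^sup>+x. ennreal (g y) * ennreal \<bar>r y x\<bar> \<partial>\<mu>)"
        by (intro nn_integral_cong) (simp add: abs_mult g_nn ennreal_mult)
      also have "\<dots> = ennreal (g y) * (\<integral>\<^sup>+x. ennreal \<bar>r y x\<bar> \<partial>\<mu>)"
        by (rule nn_integral_cmult) measurable
      finally show "(\<integral>\<^sup>+x. ennreal \<bar>g y * r y x\<bar> \<partial>\<mu>) = ennreal (g y) * (\<integral>\<^sup>+x. ennreal \<bar>r y x\<bar> \<partial>\<mu>)" .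
    qed
    also have "\<dots> \<le> (\<integral>\<^sup>+y. ennreal (g y) * (ennreal \<eta> + indicator (- K) y) \<partial>\<mu>)"
      by (intro nn_integral_mono mult_left_mono F1) simp
    also have "\<dots> = (\<integral>\<^sup>+y. ennreal \<eta> * ennreal (g y) + ennreal (g y) * indicator (- K) y \<partial>\<mu>)"
      by (intro nn_integral_cong) (simp add: distrib_left mult.commute)
    also have "\<dots> = ennreal \<eta> * (\<integral>\<^sup>+y. ennreal (g y) \<partial>\<mu>) + (\<integral>\<^sup>+y. ennreal (g y) * indicator (- K) y \<partial>\<mu>)"
    proof -
      have m1: "(\<lambda>y. ennreal \<eta> * ennreal (g y)) \<in> borel_measurable \<mu>" by measurable
      have m2: "(\<lambda>y. ennreal (g y) * indicator (- K) y) \<in> borel_measurable \<mu>" by measurable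
      have m3: "(\<lambda>y. ennreal (g y)) \<in> borel_measurable \<mu>" by measurable
      show ?thesis unfolding nn_integral_add[OF m1 m2] nn_integral_cmult[OF m3] ..
    qed
    also have "(\<integral>\<^sup>+y. ennreal (g y) * indicator (- K) y \<partial>\<mu>) = emeasure (density \<mu> g) (- K)"
      by (rule emeasure_density[symmetric]) measurable
    also have "\<dots> = ennreal q"
      unfolding q_def emeas_dens[OF Kc] meas_dens[OF Kc] ..
    moreover have "q \<ge> 0" unfolding q_def by simp
    ultimately show ?thesis using g1 eta by (simp add: ennreal_plus)
  qed
  have "L1_norm \<mu> (\<lambda>x. adj_emp a N X x - adj_op \<mu> a g x) \<le>
     (\<Sum>j<m. ennreal \<bar>ph j - p j\<bar>) + ennreal (\<eta> + qh) + ennreal (\<eta> + q)"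
    using step1 unfolding step2 I1 using I2 I3 by (meson add_left_mono add_right_mono order_trans)
  also have "\<dots> = ennreal ((\<Sum>j<m. \<bar>ph j - p j\<bar>) + (\<eta> + qh) + (\<eta> + q))"
  proof -
    have "qh \<ge> 0" unfolding qh_def by (intro divide_nonneg_nonneg sum_nonneg) auto
    moreover have "q \<ge> 0" unfolding q_def by simp
    moreover have S0: "0 \<le> (\<Sum>j<m. \<bar>ph j - p j\<bar>)" by (simp add: sum_nonneg)
    ultimately have e1: "ennreal ((\<Sum>j<m. \<bar>ph j - p j\<bar>) + (\<eta> + qh) + (\<eta> + q)) = ennreal ((\<Sum>j<m. \<bar>ph j - p j\<bar>) + (\<eta> + qh)) + ennreal (\<eta> + q)"
      and e2: "ennreal ((\<Sum>j<m. \<bar>ph j - p j\<bar>) + (\<eta> + qh)) = ennreal (\<Sum>j<m. \<bar>ph j - p j\<bar>) + ennreal (\<eta> + qh)"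
      using eta by (intro ennreal_plus add_nonneg_nonneg; simp)+
    have e3: "ennreal (\<Sum>j<m. \<bar>ph j - p j\<bar>) = (\<Sum>j<m. ennreal \<bar>ph j - p j\<bar>)"
      by (rule sum_ennreal[symmetric]) simp
    show ?thesis unfolding e1 e2 e3 ..
  qed
  also have "(\<Sum>j<m. \<bar>ph j - p j\<bar>) + (\<eta> + qh) + (\<eta> + q) =
     (\<Sum>j<m. \<bar>(\<Sum>i<N. indicator (C j) (X i)) / real N - measure (density \<mu> g) (C j)\<bar>)
        + 2 * \<eta> + (\<Sum>i<N. indicator (- K) (X i)) / real N + measure (density \<mu> g) (- K)"
    unfolding ph_def p_def qh_def q_def by linarith
  finally show ?thesis .
qed

theorem lemma8:
  fixes \<mu> :: "'a::polish_space measure" and a :: "'a \<Rightarrow> 'a \<Rightarrow> real"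
  assumes sets_mu: "sets \<mu> = sets borel"
    and sf: "sigma_finite_measure \<mu>"
    and td: "transition_density \<mu> a"
    and cont: "L1_continuous_kernel \<mu> a"
  shows "(\<forall>g \<epsilon>. prob_density \<mu> g \<longrightarrow> \<epsilon> > 0 \<longrightarrow>
            (\<exists>c1 c2. c1 > 0 \<and> c2 > 0 \<and>
               (\<forall>N\<ge>1. dev_prob \<mu> a g N \<epsilon> \<le> c1 * exp (- c2 * real N))))
       \<and> (\<forall>\<epsilon> K. \<epsilon> > 0 \<longrightarrow> compact K \<longrightarrow>
            (\<exists>c1 c2. c1 > 0 \<and> c2 > 0 \<and>
               (\<forall>g N. prob_density \<mu> g \<longrightarrow>
                   (\<integral>\<^sup>+ x \<in> K. ennreal (g x) \<partial>\<mu>) \<ge> ennreal (1 - \<epsilon> / 6) \<longrightarrow>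
                   N \<ge> 1 \<longrightarrow>
                   dev_prob \<mu> a g N \<epsilon> \<le> c1 * exp (- c2 * real N))))"
proof -
  have sp: "space \<mu> = UNIV" using sets_eq_imp_space_eq[OF sets_mu] by simp
  have A: "(\<lambda>p. a (fst p) (snd p)) \<in> borel_measurable (\<mu> \<Otimes>\<^sub>M \<mu>)"
    using td unfolding transition_density_def by (simp add: case_prod_unfold)
  have a_nn: "\<And>x y. 0 \<le> a x y" using td unfolding transition_density_def by blast
  have a1: "\<And>y. (\<integral>\<^sup>+x. ennreal (a y x) \<partial>\<mu>) = 1" using td sp unfolding transition_density_def by blast
  have dens: "prob_space (density \<mu> g)" and setsM: "sets (density \<mu> g) = sets borel"
    and emK: "\<And>S. S \<in> sets borel \<Longrightarrow> emeasure (density \<mu> g) S = (\<integral>\<^sup>+ x \<in> S. ennreal (g x) \<partial>\<mu>)"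
    if gd: "prob_density \<mu> g" for g
  proof -
    have g: "g \<in> borel_measurable \<mu>" and g1: "(\<integral>\<^sup>+x. ennreal (g x) \<partial>\<mu>) = 1"
      using gd unfolding prob_density_def by auto
    show emK: "emeasure (density \<mu> g) S = (\<integral>\<^sup>+ x \<in> S. ennreal (g x) \<partial>\<mu>)" if "S \<in> sets borel" for S
      by (rule emeasure_density) (use g that sets_mu in auto)
    show "prob_space (density \<mu> g)"
    proof (rule prob_spaceI)
      have "emeasure (density \<mu> g) UNIV = 1" using emK[of UNIV] g1 by simp
      then show "emeasure (density \<mu> g) (space (density \<mu> g)) = 1" using sp by simp
    qed
    show "sets (density \<mu> g) = sets borel" using sets_mu by simp
  qed
  have main: "\<exists>c1 c2. c1 > 0 \<and> c2 > 0 \<and>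
               (\<forall>g N. prob_density \<mu> g \<longrightarrow>
                   (\<integral>\<^sup>+ x \<in> K. ennreal (g x) \<partial>\<mu>) \<ge> ennreal (1 - \<epsilon> / 6) \<longrightarrow>
                   N \<ge> 1 \<longrightarrow>
                   dev_prob \<mu> a g N \<epsilon> \<le> c1 * exp (- c2 * real N))"
    if eps: "\<epsilon> > 0" and K: "compact K" for \<epsilon> :: real and K :: "'a set"
  proof -
    define \<eta> where "\<eta> = \<epsilon> / 12"
    have eta: "\<eta> > 0" using eps by (simp add: \<eta>_def)
    define F where "F y x = (\<integral>\<^sup>+x'. ennreal \<bar>a y x' - a x x'\<bar> \<partial>\<mu>)" for y x
    have c1: "\<And>x. ((\<lambda>y. F y x) \<longlongrightarrow> 0) (at x)" using cont by (simp add: F_def L1_continuous_kernel_def)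
    have c2: "\<And>x. F x x = 0" by (simp add: F_def)
    show ?thesis
    proof (rule partition_K[OF K eta c1 c2])
    fix m :: nat and C0 :: "nat \<Rightarrow> 'a set" and xs :: "nat \<Rightarrow> 'a" assume C0b: "\<And>j. j < m \<Longrightarrow> C0 j \<in> sets borel"
      and C0d: "\<And>j j'. j < m \<Longrightarrow> j' < m \<Longrightarrow> j \<noteq> j' \<Longrightarrow> C0 j \<inter> C0 j' = {}"
      and C0K: "(\<Union>j<m. C0 j) = K" and C0e: "\<And>j y. j < m \<Longrightarrow> y \<in> C0 j \<Longrightarrow> F y (xs j) < ennreal \<eta>"
    define C where "C j = (if j < m then C0 j else {})" for j
    have C: "\<And>j. C j \<in> sets \<mu>" using C0b sets_mu by (auto simp: C_def)
    have Cd: "\<And>j j'. j < m \<Longrightarrow> j' < m \<Longrightarrow> j \<noteq> j' \<Longrightarrow> C j \<inter> C j' = {}"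
      using C0d by (auto simp: C_def)
    have CK: "(\<Union>j<m. C j) = K" using C0K by (auto simp: C_def)
    have Ce: "\<And>j y. j < m \<Longrightarrow> y \<in> C j \<Longrightarrow> (\<integral>\<^sup>+x. ennreal \<bar>a y x - a (xs j) x\<bar> \<partial>\<mu>) < ennreal \<eta>"
      using C0e by (auto simp: C_def F_def)
    have Kb: "K \<in> sets borel" using compact_imp_closed[OF K] by auto
    have Kc: "- K \<in> sets borel" using compact_imp_closed[OF K] by auto
    define D where "D j = (if j < m then C j else - K)" for j
    define t where "t = \<epsilon> / (4 * (real m + 1))"
    have t: "t > 0" using eps by (simp add: t_def)
    show ?thesis
    proof (intro exI conjI allI impI)
      show "2 * (real m + 1) > 0" by simp
      show "2 * t\<^sup>2 > 0" using t by simp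
      fix g :: "'a \<Rightarrow> real" and N :: nat assume gd: "prob_density \<mu> g" and gK: "(\<integral>\<^sup>+ x \<in> K. ennreal (g x) \<partial>\<mu>) \<ge> ennreal (1 - \<epsilon> / 6)"
        and N: "N \<ge> 1"
      have g: "g \<in> borel_measurable \<mu>" and g_nn: "\<And>x. 0 \<le> g x" and g1: "(\<integral>\<^sup>+x. ennreal (g x) \<partial>\<mu>) = 1"
        using gd unfolding prob_density_def by auto
      define M where "M = density \<mu> g"
      have PM: "prob_space M" unfolding M_def by (rule dens[OF gd])
      interpret M: prob_space M by (rule PM)
      define P where "P = PiM {..<N} (\<lambda>_. M)"
      have PP: "prob_space P" unfolding P_def by (rule prob_space_PiM) (rule PM)
      interpret P: prob_space P by (rule PP)
      have D: "D j \<in> sets M" for j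
        using C Kc sets_mu setsM[OF gd] by (auto simp: D_def M_def)
      define E where "E j = {X \<in> space P. t \<le> \<bar>(\<Sum>i<N. indicator (D j) (X i)) / real N - measure M (D j)\<bar>}" for j
      have Em: "E j \<in> sets P" for j
        unfolding E_def P_def using D[of j] by measurable
      have hoeff: "measure P (E j) \<le> 2 * exp (- 2 * real N * t\<^sup>2)" for j
        unfolding E_def P_def by (rule hoeff_prod[OF PM D N]) (use t in simp)
      have q_le: "measure M (- K) \<le> \<epsilon> / 6"
      proof -
        have "emeasure M K = (\<integral>\<^sup>+ x \<in> K. ennreal (g x) \<partial>\<mu>)" unfolding M_def by (rule emK[OF gd Kb])
        then have "ennreal (1 - \<epsilon> / 6) \<le> ennreal (measure M K)" using gK M.emeasure_eq_measure by simp
        then have "1 - \<epsilon> / 6 \<le> measure M K" by (simp add: ennreal_le_iff)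
        moreover have "measure M (space M - K) = 1 - measure M K"
          using M.prob_compl[of K] Kb setsM[OF gd] by (simp add: M_def)
        moreover have "space M - K = - K" using sp by (auto simp: M_def)
        ultimately show ?thesis by simp
      qed
      have sub: "{X \<in> space P. ennreal \<epsilon> < L1_norm \<mu> (\<lambda>x. adj_emp a N X x - adj_op \<mu> a g x)} \<subseteq> (\<Union>j\<in>{..m}. E j)"
      proof
        fix X assume X: "X \<in> {X \<in> space P. ennreal \<epsilon> < L1_norm \<mu> (\<lambda>x. adj_emp a N X x - adj_op \<mu> a g x)}"
        show "X \<in> (\<Union>j\<in>{..m}. E j)"
        proof (rule ccontr)
          assume nX: "X \<notin> (\<Union>j\<in>{..m}. E j)"
          have lt: "\<bar>(\<Sum>i<N. indicator (D j) (X i)) / real N - measure M (D j)\<bar> < t" if "j \<le> m" for j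
            using nX X that unfolding E_def by force
          have db: "L1_norm \<mu> (\<lambda>x. adj_emp a N X x - adj_op \<mu> a g x) \<le>
             ennreal ((\<Sum>j<m. \<bar>(\<Sum>i<N. indicator (C j) (X i)) / real N - measure M (C j)\<bar>)
                + 2 * \<eta> + (\<Sum>i<N. indicator (- K) (X i)) / real N + measure M (- K))"
            unfolding M_def
            by (rule det_bound[OF sf sp A a_nn a1 g g_nn g1 C Cd CK Ce]) (use eta N in auto)
          have S: "(\<Sum>j<m. \<bar>(\<Sum>i<N. indicator (C j) (X i)) / real N - measure M (C j)\<bar>) \<le> real m * t"
          proof -
            have "(\<Sum>j<m. \<bar>(\<Sum>i<N. indicator (C j) (X i)) / real N - measure M (C j)\<bar>) \<le> real (card {..<m}) * t"
            proof (rule sum_bounded_above)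
              fix j assume "j \<in> {..<m}"
              then have jm: "j < m" by simp
              have "\<bar>(\<Sum>i<N. indicator (D j) (X i)) / real N - measure M (D j)\<bar> < t" using lt jm by simp
              then show "\<bar>(\<Sum>i<N. indicator (C j) (X i)) / real N - measure M (C j)\<bar> \<le> t"
                using jm unfolding D_def by simp
            qed
            then show ?thesis by simp
          qed
          have Q: "(\<Sum>i<N. indicator (- K) (X i)) / real N \<le> measure M (- K) + t"
            using lt[of m] by (simp add: D_def)
          have pos: "real m + 1 > 0" by simp
          have "(real m + 1) * t = \<epsilon> / 4" unfolding t_def using pos by (simp add: field_simps)
          then have "real m * t + t = \<epsilon> / 4" by (simp add: distrib_right)
          then have bound: "(\<Sum>j<m. \<bar>(\<Sum>i<N. indicator (C j) (X i)) / real N - measure M (C j)\<bar>)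
                + 2 * \<eta> + (\<Sum>i<N. indicator (- K) (X i)) / real N + measure M (- K) < \<epsilon>"
            using S Q q_le eps unfolding \<eta>_def by linarith
          have "ennreal \<epsilon> < ennreal ((\<Sum>j<m. \<bar>(\<Sum>i<N. indicator (C j) (X i)) / real N - measure M (C j)\<bar>)
                + 2 * \<eta> + (\<Sum>i<N. indicator (- K) (X i)) / real N + measure M (- K))"
            using X db by auto
          then show False using bound eps by (simp add: ennreal_less_iff)
        qed
      qed
      have "dev_prob \<mu> a g N \<epsilon> \<le> measure P (\<Union>j\<in>{..m}. E j)"
        unfolding dev_prob_def sample_space_def P_def[symmetric] M_def[symmetric]
        by (rule P.finite_measure_mono[OF sub]) (use Em in auto)
      also have "\<dots> \<le> (\<Sum>j\<in>{..m}. measure P (E j))"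
        by (rule P.finite_measure_subadditive_finite) (use Em in auto)
      also have "\<dots> \<le> (\<Sum>j\<in>{..m}. 2 * exp (- 2 * real N * t\<^sup>2))"
        by (rule sum_mono) (rule hoeff)
      also have "\<dots> = 2 * (real m + 1) * exp (- (2 * t\<^sup>2) * real N)"
        by (simp add: mult_ac)
      finally show "dev_prob \<mu> a g N \<epsilon> \<le> 2 * (real m + 1) * exp (- (2 * t\<^sup>2) * real N)" .
    qed
  qed
  qed
  show ?thesis
  proof (intro conjI allI impI)
    fix \<epsilon> :: real and K :: "'a set" assume "\<epsilon> > 0" "compact K"
    then show "\<exists>c1 c2. c1 > 0 \<and> c2 > 0 \<and>
               (\<forall>g N. prob_density \<mu> g \<longrightarrow>
                   (\<integral>\<^sup>+ x \<in> K. ennreal (g x) \<partial>\<mu>) \<ge> ennreal (1 - \<epsilon> / 6) \<longrightarrow>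
                   N \<ge> 1 \<longrightarrow>
                   dev_prob \<mu> a g N \<epsilon> \<le> c1 * exp (- c2 * real N))"
      by (rule main)
  next
    fix g and \<epsilon> :: real assume gd: "prob_density \<mu> g" and eps: "\<epsilon> > 0"
    interpret M: prob_space "density \<mu> g" by (rule dens[OF gd])
    obtain K where K: "compact K" and gK: "(\<integral>\<^sup>+ x \<in> K. ennreal (g x) \<partial>\<mu>) \<ge> ennreal (1 - \<epsilon> / 6)"
    proof (cases "\<epsilon> / 6 < 1")
      case True
      have "emeasure (density \<mu> g) UNIV = (SUP K \<in> {K. K \<subseteq> UNIV \<and> compact K}. emeasure (density \<mu> g) K)"
        by (rule inner_regular) (use setsM[OF gd] in auto)
      moreover have "emeasure (density \<mu> g) UNIV = 1" using M.emeasure_space_1 sp by simp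
      moreover have "ennreal (1 - \<epsilon> / 6) < 1"
      proof -
        have "ennreal (1 - \<epsilon> / 6) < ennreal 1" by (subst ennreal_less_iff) (use True eps in auto)
        then show ?thesis by simp
      qed
      ultimately obtain K where "compact K" "ennreal (1 - \<epsilon> / 6) < emeasure (density \<mu> g) K"
        by (metis (no_types, lifting) less_SUP_iff mem_Collect_eq)
      moreover have "K \<in> sets borel" using compact_imp_closed[OF \<open>compact K\<close>] by auto
      ultimately show ?thesis using that emK[OF gd] by (metis less_imp_le)
    next
      case False
      then have "ennreal (1 - \<epsilon> / 6) = 0" by (simp add: ennreal_eq_0_iff)
      then show ?thesis using that[of "{}"] by simp
    qed
    obtain c1 c2 where c: "c1 > 0" "c2 > 0" and bnd: "\<And>g N. prob_density \<mu> g \<Longrightarrow>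
                   (\<integral>\<^sup>+ x \<in> K. ennreal (g x) \<partial>\<mu>) \<ge> ennreal (1 - \<epsilon> / 6) \<Longrightarrow>
                   N \<ge> 1 \<Longrightarrow> dev_prob \<mu> a g N \<epsilon> \<le> c1 * exp (- c2 * real N)"
      using main[OF eps K] by blast
    show "\<exists>c1 c2. c1 > 0 \<and> c2 > 0 \<and> (\<forall>N\<ge>1. dev_prob \<mu> a g N \<epsilon> \<le> c1 * exp (- c2 * real N))"
      using c bnd[OF gd gK] by blast
  qed
qed

end
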